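(* Let $\phi$ be an instance of \textsc{Max (2,3)-SAT} with $n$ variables and let $T_\phi$ be the tournament instance constructed from $\phi$ as described in the context. Let $\mathsf{opt}_A(\phi)$ be the maximum number of clauses of $\phi$ satisfied by an assignment and $\mathsf{opt}_B(T_\phi)$ the maximum tournament value of $T_\phi$ over all seedings. Then $\mathsf{opt}_B(T_\phi)=\mathsf{opt}_A(\phi)+n$.
   Context: Tournament model: players form a finite set of size $2^{n'}$ totally ordered by strength (stronger beats weaker). A seeding is a bijection $\sigma$ from players to $[2^{n'}]$. In round $r=1,\dots,n'$, for each block of seed positions $\{(k-1)2^r+1,\dots,k2^r\}$, the winner $a$ of its first half $\{(k-1)2^r+1,\dots,(k-1)2^r+2^{r-1}\}$ plays the winner $b$ of its second half (a single-position block is won by the player seeded there), the stronger one wins the block, and the game has value $v(a,b,r)$. The tournament value is the sum of values of all games played. \textsc{Max (2,3)-SAT} instance: a CNF formula $\phi$ with variables $x_1,\dots,x_n$ and clauses $c_1,\dots,c_m$, each clause having exactly two literals and each variable appearing in at most three clauses; the occurrences of each variable $x$ as a literal are numbered $1,2,3$ (its $j$th appearance) in a fixed order. Construction of $T_\phi$: let $n'$ be the smallest integer with $16n\le 2^{n'}$ and $p=2^{n'}-16n$. Players: for each variable $x$, three variable players $x,x^T,x^F$; for each clause $c$, one clause player $c$; and dummy players $f_1,\dots,f_{13n+p-m}$. Strength order (strongest first): $x_1>x_1^T>x_1^F>x_2>x_2^T>x_2^F>\dots>x_n>x_n^T>x_n^F>c_1>\dots>c_m>f_1>\dots>f_{13n+p-m}$.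 Game values: for each variable $x$, $v(x,x^T,1)=v(x^T,x,1)=v(x,x^F,1)=v(x^F,x,1)=1$; for each clause $c$ and each literal of $c$ that is the $j$th appearance of variable $x$, if $x$ appears non-negated there set $v(c,x^T,j)=v(x^T,c,j)=1$, and otherwise set $v(c,x^F,j)=v(x^F,c,j)=1$; all other values $v(a,b,r)$ for $r\in[n']$ are $0$. *)

theory Defs
  imports Main
begin

text \<open>Strength is given by a rank function: smaller rank = stronger player.
  A seat function assigns to each seed position (1-based) a player.\<close>

definition stronger :: "('p \<Rightarrow> nat) \<Rightarrow> 'p \<Rightarrow> 'p \<Rightarrow> 'p" where
  "stronger rk a b = (if rk a \<le> rk b then a else b)"

text \<open>Winner of block k (1-based) of round r, i.e. of seed positions
  (k-1)*2^r+1 .. k*2^r; for r = 0 this is the single position k.\<close>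
fun block_winner :: "('p \<Rightarrow> nat) \<Rightarrow> (nat \<Rightarrow> 'p) \<Rightarrow> nat \<Rightarrow> nat \<Rightarrow> 'p" where
  "block_winner rk seat 0 k = seat k"
| "block_winner rk seat (Suc r) k =
     stronger rk (block_winner rk seat r (2*k - 1)) (block_winner rk seat r (2*k))"

definition tournament_value ::
  "('p \<Rightarrow> nat) \<Rightarrow> ('p \<Rightarrow> 'p \<Rightarrow> nat \<Rightarrow> nat) \<Rightarrow> (nat \<Rightarrow> 'p) \<Rightarrow> nat \<Rightarrow> nat" where
  "tournament_value rk v seat N =
     (\<Sum>r\<in>{1..N}. \<Sum>k\<in>{1..2^(N-r)}.
        v (block_winner rk seat (r-1) (2*k - 1)) (block_winner rk seat (r-1) (2*k)) r)"

definition seeding_value ::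
  "'p set \<Rightarrow> ('p \<Rightarrow> nat) \<Rightarrow> ('p \<Rightarrow> 'p \<Rightarrow> nat \<Rightarrow> nat) \<Rightarrow> nat \<Rightarrow> ('p \<Rightarrow> nat) \<Rightarrow> nat" where
  "seeding_value P rk v N \<sigma> = tournament_value rk v (the_inv_into P \<sigma>) N"

definition opt_B ::
  "'p set \<Rightarrow> ('p \<Rightarrow> nat) \<Rightarrow> ('p \<Rightarrow> 'p \<Rightarrow> nat \<Rightarrow> nat) \<Rightarrow> nat \<Rightarrow> nat" where
  "opt_B P rk v N = Max (seeding_value P rk v N ` {\<sigma>. bij_betw \<sigma> P {1..2^N}})"

text \<open>An instance: n variables x_1..x_n, m clauses c_1..c_m; lit j q (q = 1,2) is the
  q-th literal of clause j, as (variable index, True iff non-negated);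
  occ j q is the occurrence number (1,2,3) of that literal among the appearances of its variable.\<close>

definition occurrences :: "nat \<Rightarrow> (nat \<Rightarrow> nat \<Rightarrow> nat \<times> bool) \<Rightarrow> nat \<Rightarrow> (nat \<times> nat) set" where
  "occurrences m lit x = {(j, q). j \<in> {1..m} \<and> q \<in> {1, 2} \<and> fst (lit j q) = x}"

definition max23sat_instance ::
  "nat \<Rightarrow> nat \<Rightarrow> (nat \<Rightarrow> nat \<Rightarrow> nat \<times> bool) \<Rightarrow> (nat \<Rightarrow> nat \<Rightarrow> nat) \<Rightarrow> bool" where
  "max23sat_instance n m lit occ \<longleftrightarrow>
     (\<forall>j\<in>{1..m}. \<forall>q\<in>{1,2::nat}. fst (lit j q) \<in> {1..n}) \<and>
     (\<forall>j\<in>{1..m}. lit j 1 \<noteq> lit j 2) \<and>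
     (\<forall>x\<in>{1..n}. card {j\<in>{1..m}. \<exists>q\<in>{1,2::nat}. fst (lit j q) = x} \<le> 3) \<and>
     (\<forall>x\<in>{1..n}. card (occurrences m lit x) \<le> 3 \<and>
        bij_betw (\<lambda>(j, q). occ j q) (occurrences m lit x) {1..card (occurrences m lit x)})"

definition clause_sat :: "(nat \<Rightarrow> nat \<Rightarrow> nat \<times> bool) \<Rightarrow> (nat \<Rightarrow> bool) \<Rightarrow> nat \<Rightarrow> bool" where
  "clause_sat lit a j \<longleftrightarrow> (\<exists>q\<in>{1,2::nat}. a (fst (lit j q)) = snd (lit j q))"

definition opt_A :: "nat \<Rightarrow> (nat \<Rightarrow> nat \<Rightarrow> nat \<times> bool) \<Rightarrow> nat" where
  "opt_A m lit = Max ((\<lambda>a. card {j\<in>{1..m}. clause_sat lit a j}) ` (UNIV :: (nat \<Rightarrow> bool) set))"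

datatype player = PVar nat | PT nat | PF nat | PC nat | PD nat

definition T_rounds :: "nat \<Rightarrow> nat" where
  "T_rounds n = (LEAST N. 16 * n \<le> 2 ^ N)"

definition T_pad :: "nat \<Rightarrow> nat" where
  "T_pad n = 2 ^ T_rounds n - 16 * n"

definition T_players :: "nat \<Rightarrow> nat \<Rightarrow> player set" where
  "T_players n m =
     PVar ` {1..n} \<union> PT ` {1..n} \<union> PF ` {1..n} \<union> PC ` {1..m}
     \<union> PD ` {1..13 * n + T_pad n - m}"

text \<open>Strength order x_1 > x_1^T > x_1^F > ... > x_n^F > c_1 > ... > c_m > f_1 > ...;
  rank 0 is the strongest.\<close>
fun T_rank :: "nat \<Rightarrow> nat \<Rightarrow> player \<Rightarrow> nat" where
  "T_rank n m (PVar i) = 3 * (i - 1)"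
| "T_rank n m (PT i) = 3 * (i - 1) + 1"
| "T_rank n m (PF i) = 3 * (i - 1) + 2"
| "T_rank n m (PC j) = 3 * n + (j - 1)"
| "T_rank n m (PD k) = 3 * n + m + (k - 1)"

definition lit_player :: "nat \<times> bool \<Rightarrow> player" where
  "lit_player l = (if snd l then PT (fst l) else PF (fst l))"

definition T_value ::
  "nat \<Rightarrow> nat \<Rightarrow> (nat \<Rightarrow> nat \<Rightarrow> nat \<times> bool) \<Rightarrow> (nat \<Rightarrow> nat \<Rightarrow> nat) \<Rightarrow> player \<Rightarrow> player \<Rightarrow> nat \<Rightarrow> nat" where
  "T_value n m lit occ a b r =
     (if (r = 1 \<and> (\<exists>i\<in>{1..n}. (a, b) \<in> {(PVar i, PT i), (PT i, PVar i), (PVar i, PF i), (PF i, PVar i)}))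
       \<or> (\<exists>j\<in>{1..m}. \<exists>q\<in>{1,2::nat}. r = occ j q \<and>
            ((a, b) = (PC j, lit_player (lit j q)) \<or> (a, b) = (lit_player (lit j q), PC j)))
      then 1 else 0)"

end

theory Submission
  imports Defs
begin


definition blk :: "nat \<Rightarrow> nat \<Rightarrow> nat set" where
  "blk r k = {(k-1)*2^r+1 .. k*2^r}"

lemma blk_Suc:
  assumes "k \<ge> 1"
  shows "blk (Suc r) k = blk r (2*k-1) \<union> blk r (2*k)"
proof -
  obtain k0 where k: "k = Suc k0" using assms by (cases k) auto
  define P :: nat where "P = 2^r"
  have "blk (Suc r) k = {k0*(2*P)+1 .. k0*(2*P) + 2*P}"
    unfolding blk_def k P_def by (simp add: algebra_simps)
  moreover have "blk r (2*k-1) = {k0*(2*P)+1 .. k0*(2*P) + P}"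
    unfolding blk_def k P_def by (simp add: algebra_simps)
  moreover have "blk r (2*k) = {k0*(2*P)+P+1 .. k0*(2*P) + 2*P}"
    unfolding blk_def k P_def by (simp add: algebra_simps)
  ultimately show ?thesis by auto
qed

lemma div_eq_aux: assumes h1: "k0 * 2^r + 1 \<le> s" "s \<le> k0 * 2^r + 2^r" shows "(s-1) div 2^r = (k0::nat)"
proof (rule div_nat_eqI)
  show "2 ^ r * k0 \<le> s - 1" using h1 by (simp add: mult.commute)
  show "s - 1 < 2 ^ r * Suc k0" using h1 by (simp add: mult.commute)
qed

lemma div_lt_aux: "(s::nat) - 1 < 2^r * Suc ((s-1) div 2^r)" 
proof -
  have "(s-1) mod 2^r < 2^r" by simp
  moreover have "2^r*((s-1) div 2^r) + (s-1) mod 2^r = s-1" by (rule mult_div_mod_eq)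
  ultimately show ?thesis unfolding mult_Suc_right by linarith
qed

lemma blk_iff:
  "(s \<in> blk r k \<and> k \<ge> 1) \<longleftrightarrow> (s \<ge> 1 \<and> k = (s-1) div 2^r + 1)"
proof
  assume h: "s \<in> blk r k \<and> k \<ge> 1"
  then obtain k0 where k: "k = Suc k0" by (cases k) auto
  have h1: "k0 * 2^r + 1 \<le> s" "s \<le> k0 * 2^r + 2^r" using h unfolding blk_def k by auto
  have "(s-1) div 2^r = k0" using div_eq_aux[OF h1] .
  then show "s \<ge> 1 \<and> k = (s-1) div 2^r + 1" using h1 k by auto
next
  assume h: "s \<ge> 1 \<and> k = (s-1) div 2^r + 1"
  define k0 where "k0 = (s-1) div 2^r"
  have a: "2^r * k0 \<le> s - 1" unfolding k0_def by simp
  have b: "s - 1 < 2^r * Suc k0" unfolding k0_def by (rule div_lt_aux)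
  have k: "k = Suc k0" using h k0_def by simp
  have a': "k0 * 2^r \<le> s - 1" "s - 1 < k0 * 2^r + 2^r" using a b by (simp_all add: mult.commute)
  have "k0 * 2^r + 1 \<le> s" "s \<le> k0 * 2^r + 2^r" using a' h by linarith+
  then show "s \<in> blk r k \<and> k \<ge> 1" unfolding blk_def k by simp
qed

lemma blk_nest:
  assumes "s \<in> blk r k" "s \<in> blk r' k'" "k \<ge> 1" "k' \<ge> 1" "r \<le> r'"
  shows "blk r k \<subseteq> blk r' k'"
proof
  fix t assume t: "t \<in> blk r k"
  have e1: "k = (s-1) div 2^r + 1" "k = (t-1) div 2^r + 1" "s \<ge> 1" "t \<ge> 1"
    using blk_iff assms t by blast+
  have e2: "k' = (s-1) div 2^r' + 1" using blk_iff assms by blast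
  have p: "(2::nat)^r' = 2^r * 2^(r'-r)" using assms(5) by (simp add: power_add[symmetric])
  have "(t-1) div 2^r' = (s-1) div 2^r'"
    unfolding p div_mult2_eq using e1 by simp
  then show "t \<in> blk r' k'" using blk_iff e1 e2 by metis
qed

lemma blk_halves:
  assumes "k \<ge> 1" "r \<ge> 1"
  shows "blk (r-1) (2*k-1) \<subseteq> blk r k" "blk (r-1) (2*k) \<subseteq> blk r k"
  using blk_Suc[OF assms(1), of "r-1"] assms(2) by auto

lemma blk_range:
  assumes "1 \<le> k" "k \<le> 2^(N-r)" "r \<le> N"
  shows "blk r k \<subseteq> {1..2^N}"
proof -
  have "k * 2^r \<le> 2^(N-r) * 2^r" using assms by simp
  also have "\<dots> = 2^N" using assms(3) by (simp add: power_add[symmetric])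
  finally show ?thesis unfolding blk_def by auto
qed

lemma winner_in_min:
  assumes "k \<ge> 1"
  shows "block_winner rk seat r k \<in> seat ` blk r k \<and>
         (\<forall>s\<in>blk r k. rk (block_winner rk seat r k) \<le> rk (seat s))"
  using assms
proof (induction r arbitrary: k)
  case 0
  then show ?case unfolding blk_def by auto
next
  case (Suc r)
  have k1: "2*k-1 \<ge> 1" "2*k \<ge> 1" using Suc.prems by auto
  note IH1 = Suc.IH[OF k1(1)] and IH2 = Suc.IH[OF k1(2)]
  show ?case
    unfolding blk_Suc[OF Suc.prems] block_winner.simps stronger_def
    using IH1 IH2 by (auto split: if_splits)
qed

lemma winner_cong:
  assumes "\<And>s. s \<in> blk r k \<Longrightarrow> seat s = seat' s" "k \<ge> 1"
  shows "block_winner rk seat r k = block_winner rk seat' r k"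
  using assms
proof (induction r arbitrary: k)
  case 0
  then show ?case unfolding blk_def by auto
next
  case (Suc r)
  have k1: "2*k-1 \<ge> 1" "2*k \<ge> 1" using Suc.prems by auto
  have sub: "blk r (2*k-1) \<subseteq> blk (Suc r) k" "blk r (2*k) \<subseteq> blk (Suc r) k"
    using blk_Suc[OF Suc.prems(2)] by auto
  have e1: "block_winner rk seat r (2*k-1) = block_winner rk seat' r (2*k-1)"
    using Suc.IH[OF _ k1(1)] Suc.prems(1) sub(1) by blast
  have e2: "block_winner rk seat r (2*k) = block_winner rk seat' r (2*k)"
    using Suc.IH[OF _ k1(2)] Suc.prems(1) sub(2) by blast
  show ?case by (simp only: block_winner.simps e1 e2)
qed

lemma winner_unique:
  assumes "k \<ge> 1" "s0 \<in> blk r k" "\<And>s. s \<in> blk r k \<Longrightarrow> s \<noteq> s0 \<Longrightarrow> rk (seat s0) < rk (seat s)"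
  shows "block_winner rk seat r k = seat s0"
proof -
  have w: "block_winner rk seat r k \<in> seat ` blk r k" using winner_in_min[OF assms(1)] by (rule conjunct1)
  obtain s where s: "s \<in> blk r k" "block_winner rk seat r k = seat s"
    using w by (rule imageE) 
  have m: "rk (block_winner rk seat r k) \<le> rk (seat s0)" using bspec[OF conjunct2[OF winner_in_min[OF assms(1)]] assms(2)] .
  have le: "rk (seat s) \<le> rk (seat s0)" using m unfolding s(2) .
  have "s = s0"
  proof (rule ccontr)
    assume "s \<noteq> s0"
    then have "rk (seat s0) < rk (seat s)" by (rule assms(3)[OF s(1)])
    with le show False by simp
  qed
  then show ?thesis using s(2) by (simp only:)
qed


definition plays :: "('p \<Rightarrow> nat) \<Rightarrow> (nat \<Rightarrow> 'p) \<Rightarrow> 'p \<Rightarrow> nat \<Rightarrow> nat \<Rightarrow> bool" where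
  "plays rk seat p r k \<longleftrightarrow> p = block_winner rk seat (r-1) (2*k-1) \<or> p = block_winner rk seat (r-1) (2*k)"

lemma plays_pos:
  assumes "r \<ge> 1" "k \<ge> 1" "plays rk seat p r k"
  shows "\<exists>s\<in>blk r k. p = seat s"
proof -
  have k1: "2*k-1 \<ge> 1" "2*k \<ge> 1" using assms by auto
  have a: "block_winner rk seat (r-1) (2*k-1) \<in> seat ` blk r k"
    using subsetD[OF image_mono[OF blk_halves(1)[OF assms(2,1)]] conjunct1[OF winner_in_min[OF k1(1)]]] .
  have b: "block_winner rk seat (r-1) (2*k) \<in> seat ` blk r k"
    using subsetD[OF image_mono[OF blk_halves(2)[OF assms(2,1)]] conjunct1[OF winner_in_min[OF k1(2)]]] .
  have "p \<in> seat ` blk r k" using assms(3) a b unfolding plays_def by auto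
  then show ?thesis by (rule imageE) auto
qed

lemma plays_same_round:
  assumes inj: "inj_on seat {1..2^N}" and r: "1 \<le> r" "r \<le> N"
    and k: "1 \<le> k" "k \<le> 2^(N-r)" and k': "1 \<le> k'" "k' \<le> 2^(N-r)"
    and p: "plays rk seat p r k" "plays rk seat p r k'"
  shows "k = k'"
proof -
  obtain s where s: "s \<in> blk r k" "p = seat s" using plays_pos[OF r(1) k(1) p(1)] by blast
  obtain s' where s': "s' \<in> blk r k'" "p = seat s'" using plays_pos[OF r(1) k'(1) p(2)] by blast
  have "s \<in> {1..2^N}" using blk_range[OF k r(2)] s(1) by blast
  moreover have "s' \<in> {1..2^N}" using blk_range[OF k' r(2)] s'(1) by blast
  ultimately have "s = s'" using inj_onD[OF inj, of s s'] s(2) s'(2) by simp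
  then show ?thesis using blk_iff s(1) s'(1) k(1) k'(1) by metis
qed

lemma plays_loser:
  assumes inj: "inj_on seat {1..2^N}" and r: "1 \<le> r" "r < r'" "r' \<le> N"
    and k: "1 \<le> k" "k \<le> 2^(N-r)" and k': "1 \<le> k'" "k' \<le> 2^(N-r')"
    and p: "plays rk seat p r k" "plays rk seat q r k" "rk q < rk p" "plays rk seat p r' k'"
  shows False
proof -
  obtain k'' where k'': "k'' = 2*k'-1 \<or> k'' = 2*k'" "p = block_winner rk seat (r'-1) k''"
    using p(4) unfolding plays_def by blast
  have k''1: "k'' \<ge> 1" using k'' k' by auto
  have r'1: "r' \<ge> 1" using r by simp
  have sub: "blk (r'-1) k'' \<subseteq> blk r' k'" using blk_halves[OF k'(1) r'1] k''(1) by blast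
  have rng': "blk r' k' \<subseteq> {1..2^N}" using blk_range[OF k' r(3)] .
  have rng: "blk r k \<subseteq> {1..2^N}" using blk_range[OF k] r by simp
  obtain s'' where s'': "s'' \<in> blk (r'-1) k''" "p = seat s''"
    using conjunct1[OF winner_in_min[OF k''1]] k''(2) by (metis imageE)
  obtain s where s: "s \<in> blk r k" "p = seat s" using plays_pos[OF r(1) k(1) p(1)] by blast
  obtain sq where sq: "sq \<in> blk r k" "q = seat sq" using plays_pos[OF r(1) k(1) p(2)] by blast
  have "s \<in> {1..2^N}" "s'' \<in> {1..2^N}" using s(1) s''(1) sub rng rng' by blast+
  then have "s = s''" using inj_onD[OF inj, of s s''] s(2) s''(2) by simp
  then have nest: "blk r k \<subseteq> blk (r'-1) k''" using blk_nest[OF s(1) _ k(1) k''1, of "r'-1"] s''(1) r by simp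
  have "rk (block_winner rk seat (r'-1) k'') \<le> rk (seat sq)"
    using bspec[OF conjunct2[OF winner_in_min[OF k''1]]] nest sq(1) by blast
  then have "rk p \<le> rk q" using k''(2) sq(2) by simp
  then show False using p(3) by simp
qed

lemma tv_cong:
  assumes "\<And>s. s \<in> {1..2^N} \<Longrightarrow> seat s = seat' s"
  shows "tournament_value rk v seat N = tournament_value rk v seat' N"
  unfolding tournament_value_def
proof (intro sum.cong refl)
  fix r k :: nat assume r: "r \<in> {1..N}" and k: "k \<in> {1..2^(N-r)}"
  have k1: "k \<ge> 1" "k \<le> 2^(N-r)" using k by auto
  have rng: "blk r k \<subseteq> {1..2^N}" using blk_range[OF k1] r by simp
  have r1: "r \<ge> 1" using r by simp
  have "block_winner rk seat (r-1) (2*k-1) = block_winner rk seat' (r-1) (2*k-1)"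
  proof (rule winner_cong)
    fix s assume "s \<in> blk (r-1) (2*k-1)"
    then have "s \<in> {1..2^N}" using rng blk_halves(1)[OF k1(1) r1] by (meson subsetD)
    then show "seat s = seat' s" by (rule assms)
  qed (use k1 in simp)
  moreover have "block_winner rk seat (r-1) (2*k) = block_winner rk seat' (r-1) (2*k)"
  proof (rule winner_cong)
    fix s assume "s \<in> blk (r-1) (2*k)"
    then have "s \<in> {1..2^N}" using rng blk_halves(2)[OF k1(1) r1] by (meson subsetD)
    then show "seat s = seat' s" by (rule assms)
  qed (use k1 in simp)
  ultimately show "v (block_winner rk seat (r - 1) (2 * k - 1)) (block_winner rk seat (r - 1) (2 * k)) r =
         v (block_winner rk seat' (r - 1) (2 * k - 1)) (block_winner rk seat' (r - 1) (2 * k)) r" by simp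
qed



definition vgame :: "nat \<Rightarrow> player \<Rightarrow> player \<Rightarrow> nat \<Rightarrow> bool" where
  "vgame n x y r \<longleftrightarrow> r = 1 \<and> (\<exists>i\<in>{1..n}. (x, y) \<in> {(PVar i, PT i), (PT i, PVar i), (PVar i, PF i), (PF i, PVar i)})"

definition cgame :: "nat \<Rightarrow> (nat \<Rightarrow> nat \<Rightarrow> nat \<times> bool) \<Rightarrow> (nat \<Rightarrow> nat \<Rightarrow> nat) \<Rightarrow> player \<Rightarrow> player \<Rightarrow> nat \<Rightarrow> nat \<Rightarrow> nat \<Rightarrow> bool" where
  "cgame m lit occ x y r j q \<longleftrightarrow> j \<in> {1..m} \<and> q \<in> {1,2} \<and> r = occ j q \<and>
     ((x, y) = (PC j, lit_player (lit j q)) \<or> (x, y) = (lit_player (lit j q), PC j))"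

lemma T_value_eq:
  "T_value n m lit occ x y r = (if vgame n x y r \<or> (\<exists>j q. cgame m lit occ x y r j q) then 1 else 0)"
  unfolding T_value_def vgame_def cgame_def by (simp add: Bex_def)

lemma tv_as_card:
  fixes N :: nat and rk :: "'p \<Rightarrow> nat" and v :: "'p \<Rightarrow> 'p \<Rightarrow> nat \<Rightarrow> nat"
  defines "I \<equiv> Sigma {1..N} (\<lambda>r. {1..2^(N-r)})"
  assumes v01: "\<And>x y r. v x y r = (if P x y r then 1 else 0)"
  shows "tournament_value rk v seat N =
    card {g\<in>I. P (block_winner rk seat (fst g - 1) (2 * snd g - 1)) (block_winner rk seat (fst g - 1) (2 * snd g)) (fst g)}"
proof -
  have "tournament_value rk v seat N =
     (\<Sum>g\<in>I. v (block_winner rk seat (fst g - 1) (2 * snd g - 1)) (block_winner rk seat (fst g - 1) (2 * snd g)) (fst g))"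
    unfolding tournament_value_def I_def by (subst sum.Sigma) (auto simp: case_prod_beta')
  also have "\<dots> = (\<Sum>g\<in>I. if P (block_winner rk seat (fst g - 1) (2 * snd g - 1)) (block_winner rk seat (fst g - 1) (2 * snd g)) (fst g) then 1 else 0)"
    by (simp only: v01)
  also have "\<dots> = card {g\<in>I. P (block_winner rk seat (fst g - 1) (2 * snd g - 1)) (block_winner rk seat (fst g - 1) (2 * snd g)) (fst g)}"
    unfolding I_def by (subst sum.inter_filter[symmetric]) auto
  finally show ?thesis .
qed


lemma inst_facts:
  assumes "max23sat_instance n m lit occ"
  shows "\<And>j q. j \<in> {1..m} \<Longrightarrow> q \<in> {1,2} \<Longrightarrow> fst (lit j q) \<in> {1..n}"
    and "\<And>x. x \<in> {1..n} \<Longrightarrow> card (occurrences m lit x) \<le> 3"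
    and "\<And>x. finite (occurrences m lit x)"
proof -
  show "\<And>j q. j \<in> {1..m} \<Longrightarrow> q \<in> {1,2} \<Longrightarrow> fst (lit j q) \<in> {1..n}"
    using assms unfolding max23sat_instance_def by blast
  show "\<And>x. x \<in> {1..n} \<Longrightarrow> card (occurrences m lit x) \<le> 3"
    using assms unfolding max23sat_instance_def by blast
  fix x
  have "occurrences m lit x \<subseteq> {1..m} \<times> {1,2}" unfolding occurrences_def by auto
  then show "finite (occurrences m lit x)" by (rule finite_subset) auto
qed

lemma rank_facts:
  "T_rank n m (PVar x) < T_rank n m (PT x)"
  "T_rank n m (PVar x) < T_rank n m (PF x)"
  "x \<in> {1..n} \<Longrightarrow> T_rank n m (lit_player (x, b)) < T_rank n m (PC j)"
  by (auto simp: lit_player_def)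

lemma three_players:
  assumes "plays rk seat p r k" "plays rk seat q r k" "plays rk seat s r k" "p \<noteq> q" "q \<noteq> s" "p \<noteq> s"
  shows False
  using assms unfolding plays_def by metis

lemma upper:
  fixes seat :: "nat \<Rightarrow> player"
  assumes inst: "max23sat_instance n m lit occ" and inj: "inj_on seat {1..2^N}"
  shows "tournament_value (T_rank n m) (T_value n m lit occ) seat N \<le> opt_A m lit + n"
proof -
  define rk where "rk = T_rank n m"
  define I where "I = Sigma {1..N} (\<lambda>r. {1..(2::nat)^(N-r)})"
  define A where "A g = block_winner rk seat (fst g - 1) (2 * snd g - 1)" for g
  define B where "B g = block_winner rk seat (fst g - 1) (2 * snd g)" for g
  define good where "good g \<longleftrightarrow> vgame n (A g) (B g) (fst g) \<or> (\<exists>j q. cgame m lit occ (A g) (B g) (fst g) j q)" for g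
  define G where "G = {g\<in>I. good g}"
  define pl where "pl p g \<longleftrightarrow> plays rk seat p (fst g) (snd g)" for p g
  have tv: "tournament_value (T_rank n m) (T_value n m lit occ) seat N = card G"
    unfolding G_def good_def A_def B_def I_def rk_def
    by (rule tv_as_card) (rule T_value_eq)
  have plAB: "pl p g \<longleftrightarrow> p = A g \<or> p = B g" for p g
    unfolding pl_def plays_def A_def B_def ..
  have inI: "1 \<le> fst g \<and> fst g \<le> N \<and> 1 \<le> snd g \<and> snd g \<le> 2^(N - fst g)" if "g \<in> I" for g
    using that unfolding I_def by auto
  have same: "g1 = g2" if "g1 \<in> I" "g2 \<in> I" "fst g1 = fst g2" "pl p g1" "pl p g2" for g1 g2 p
  proof -
    have "snd g1 = snd g2"
      using plays_same_round[OF inj, of "fst g1" "snd g1" "snd g2" rk p] inI[OF that(1)] inI[OF that(2)] that(3-5)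
      unfolding pl_def by simp
    then show ?thesis using that(3) by (simp add: prod_eq_iff)
  qed
  have loser: False if "g1 \<in> I" "g2 \<in> I" "fst g1 < fst g2" "pl p g1" "pl q g1" "rk q < rk p" "pl p g2" for g1 g2 p q
    using plays_loser[OF inj, of "fst g1" "fst g2" "snd g1" "snd g2" rk p q] inI[OF that(1)] inI[OF that(2)] that(3-7)
    unfolding pl_def by simp
  have three: False if "pl p g" "pl q g" "pl s g" "p \<noteq> q" "q \<noteq> s" "p \<noteq> s" for p q s g
    using three_players that unfolding pl_def by metis
  define ptg where "ptg x \<longleftrightarrow> (\<exists>g\<in>I. fst g = 1 \<and> pl (PVar x) g \<and> pl (PT x) g)" for x
  define pfg where "pfg x \<longleftrightarrow> (\<exists>g\<in>I. fst g = 1 \<and> pl (PVar x) g \<and> pl (PF x) g)" for x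
  define negs where "negs x = {oc\<in>occurrences m lit x. snd (lit (fst oc) (snd oc)) = False}" for x
  define a where "a x = (if ptg x then False else if pfg x then True else card (negs x) \<le> 1)" for x
  have K: False if "g0 \<in> I" "fst g0 = 1" "pl (PVar x) g0" "pl L g0" "L \<in> {PT x, PF x}"
      "g \<in> I" "pl L g" "pl (PC j) g" for g0 x L g j
  proof (cases "fst g = 1")
    case True
    then have "g = g0" using same[OF that(6) that(1) _ that(7) that(4)] that(2) by simp
    then show False using three[OF that(3) that(4), of "PC j"] that(5,8) by auto
  next
    case False
    then have "fst g0 < fst g" using inI[OF that(6)] that(2) by simp
    moreover have "rk (PVar x) < rk L" using that(5) rank_facts unfolding rk_def by auto
    ultimately show False using loser[OF that(1) that(6) _ that(4) that(3) _ that(7)] by simp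
  qed
  have Kf: False if "x \<in> {1..n}" "ptg x \<or> pfg x" "g \<in> I" "pl (lit_player (x, b)) g" "pl (PC j) g" "a x \<noteq> b"
    for x b g j
  proof (cases "ptg x")
    case True
    then obtain g0 where g0: "g0 \<in> I" "fst g0 = 1" "pl (PVar x) g0" "pl (PT x) g0" unfolding ptg_def by blast
    have "b = True" using that(6) True unfolding a_def by simp
    then have "pl (PT x) g" using that(4) by (simp add: lit_player_def)
    then show False using K[OF g0(1,2,3,4) _ that(3) _ that(5)] by simp
  next
    case False
    then have pf: "pfg x" using that(2) by simp
    then obtain g0 where g0: "g0 \<in> I" "fst g0 = 1" "pl (PVar x) g0" "pl (PF x) g0" unfolding pfg_def by blast
    have "b = False" using that(6) False pf unfolding a_def by simp
    then have "pl (PF x) g" using that(4) by (simp add: lit_player_def)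
    then show False using K[OF g0(1,2,3,4) _ that(3) _ that(5)] by simp
  qed
  define vi where "vi g = (SOME i. i\<in>{1..n} \<and> (A g, B g) \<in> {(PVar i, PT i), (PT i, PVar i), (PVar i, PF i), (PF i, PVar i)})" for g
  define cj where "cj g = (SOME jq. cgame m lit occ (A g) (B g) (fst g) (fst jq) (snd jq))" for g
  define tok where "tok g = (if vgame n (A g) (B g) (fst g) then Inl (vi g)
      else if a (fst (lit (fst (cj g)) (snd (cj g)))) = snd (lit (fst (cj g)) (snd (cj g)))
           then Inr (fst (cj g)) else Inl (fst (lit (fst (cj g)) (snd (cj g)))))" for g
  have varf: "fst g = 1 \<and> vi g \<in> {1..n} \<and> pl (PVar (vi g)) g \<and> (pl (PT (vi g)) g \<or> pl (PF (vi g)) g) \<and> tok g = Inl (vi g)"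
    if "vgame n (A g) (B g) (fst g)" for g
  proof -
    have ex: "\<exists>i. i\<in>{1..n} \<and> (A g, B g) \<in> {(PVar i, PT i), (PT i, PVar i), (PVar i, PF i), (PF i, PVar i)}"
      using that unfolding vgame_def by blast
    have "vi g\<in>{1..n} \<and> (A g, B g) \<in> {(PVar (vi g), PT (vi g)), (PT (vi g), PVar (vi g)), (PVar (vi g), PF (vi g)), (PF (vi g), PVar (vi g))}"
      unfolding vi_def by (rule someI_ex[OF ex])
    then show ?thesis using that unfolding plAB tok_def vgame_def by auto
  qed
  have clf: "fst (cj g) \<in> {1..m} \<and> snd (cj g) \<in> {1,2} \<and> fst g = occ (fst (cj g)) (snd (cj g))
      \<and> pl (PC (fst (cj g))) g \<and> pl (lit_player (lit (fst (cj g)) (snd (cj g)))) g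
      \<and> tok g = (if a (fst (lit (fst (cj g)) (snd (cj g)))) = snd (lit (fst (cj g)) (snd (cj g)))
           then Inr (fst (cj g)) else Inl (fst (lit (fst (cj g)) (snd (cj g)))))"
    if "g \<in> G" "\<not> vgame n (A g) (B g) (fst g)" for g
  proof -
    have ex: "\<exists>jq. cgame m lit occ (A g) (B g) (fst g) (fst jq) (snd jq)"
      using that unfolding G_def good_def by auto
    have "cgame m lit occ (A g) (B g) (fst g) (fst (cj g)) (snd (cj g))"
      unfolding cj_def by (rule someI_ex[OF ex])
    then show ?thesis using that(2) unfolding plAB tok_def cgame_def by auto
  qed
  have GI: "g \<in> I" if "g \<in> G" for g using that unfolding G_def by simp
  have VC: False if "g1 \<in> G" "vgame n (A g1) (B g1) (fst g1)" "g2 \<in> G" "\<not> vgame n (A g2) (B g2) (fst g2)"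
     "tok g1 = tok g2" for g1 g2
  proof -
    define j where "j = fst (cj g2)"
    define q where "q = snd (cj g2)"
    define x where "x = vi g1"
    note v = varf[OF that(2)] and c = clf[OF that(3,4)]
    have t2: "tok g2 = Inl x" using v that(5) unfolding x_def by simp
    have xe: "fst (lit j q) = x" and ne: "a x \<noteq> snd (lit j q)"
      using c t2 unfolding j_def q_def by (auto split: if_splits)
    have lj: "lit j q = (x, snd (lit j q))" using xe by (metis prod.collapse)
    have x1: "x \<in> {1..n}" using v unfolding x_def by simp
    have "ptg x \<or> pfg x" using v GI[OF that(1)] unfolding ptg_def pfg_def x_def by blast
    moreover have "pl (lit_player (x, snd (lit j q))) g2" using c lj unfolding j_def q_def by metis
    ultimately show False using Kf[OF x1 _ GI[OF that(3)] _ _ ne] c unfolding j_def q_def by blast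
  qed
  have CC: "g1 = g2" if "g1 \<in> G" "\<not> vgame n (A g1) (B g1) (fst g1)" "g2 \<in> G" "\<not> vgame n (A g2) (B g2) (fst g2)"
     "tok g1 = tok g2" for g1 g2
  proof -
    define j1 where "j1 = fst (cj g1)"
    define q1 where "q1 = snd (cj g1)"
    define j2 where "j2 = fst (cj g2)"
    define q2 where "q2 = snd (cj g2)"
    note c1 = clf[OF that(1,2), folded j1_def q1_def] and c2 = clf[OF that(3,4), folded j2_def q2_def]
    have x1: "fst (lit j1 q1) \<in> {1..n}" using inst_facts(1)[OF inst] c1 by blast
    have x2: "fst (lit j2 q2) \<in> {1..n}" using inst_facts(1)[OF inst] c2 by blast
    have lj1: "lit j1 q1 = (fst (lit j1 q1), snd (lit j1 q1))" by simp
    have lj2: "lit j2 q2 = (fst (lit j2 q2), snd (lit j2 q2))" by simp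
    have rk1: "rk (lit_player (lit j1 q1)) < rk (PC j1)" using rank_facts(3)[OF x1] lj1 unfolding rk_def by metis
    have rk2: "rk (lit_player (lit j2 q2)) < rk (PC j2)" using rank_facts(3)[OF x2] lj2 unfolding rk_def by metis
    show ?thesis
    proof (cases "a (fst (lit j1 q1)) = snd (lit j1 q1)")
      case T1: True
      then have t1: "tok g1 = Inr j1" using c1 by simp
      then have T2: "a (fst (lit j2 q2)) = snd (lit j2 q2)" and jj: "j2 = j1" using c2 that(5) by (auto split: if_splits)
      have "\<not> fst g1 < fst g2"
      proof
        assume "fst g1 < fst g2"
        then show False using loser[OF GI[OF that(1)] GI[OF that(3)] _ _ _ rk1] c1 c2 jj by blast
      qed
      moreover have "\<not> fst g2 < fst g1"
      proof
        assume "fst g2 < fst g1"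
        then show False using loser[OF GI[OF that(3)] GI[OF that(1)] _ _ _ rk2] c1 c2 jj by blast
      qed
      ultimately have "fst g1 = fst g2" by simp
      then show ?thesis using same[OF GI[OF that(1)] GI[OF that(3)]] c1 c2 jj by blast
    next
      case F1: False
      define x where "x = fst (lit j1 q1)"
      have t1: "tok g1 = Inl x" using c1 F1 unfolding x_def by simp
      then have F2: "a (fst (lit j2 q2)) \<noteq> snd (lit j2 q2)" and xx: "fst (lit j2 q2) = x"
        using c2 that(5) by (auto split: if_splits)
      have nptg: "\<not> (ptg x \<or> pfg x)"
      proof
        assume h: "ptg x \<or> pfg x"
        have "pl (lit_player (x, snd (lit j1 q1))) g1" using c1 lj1 unfolding x_def by metis
        then show False using Kf[OF x1[folded x_def] h GI[OF that(1)] _ _ F1[folded x_def]] c1 by blast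
      qed
      then have ax: "a x = (card (negs x) \<le> 1)" unfolding a_def by simp
      define S where "S = {oc\<in>occurrences m lit x. snd (lit (fst oc) (snd oc)) \<noteq> a x}"
      have in1: "(j1, q1) \<in> S" using c1 F1 unfolding S_def occurrences_def x_def by auto
      have in2: "(j2, q2) \<in> S" using c2 F2 xx unfolding S_def occurrences_def by auto
      have finS: "finite S" unfolding S_def using inst_facts(3)[OF inst] by simp
      have cardS: "card S \<le> 1"
      proof (cases "a x")
        case True
        then have "S = negs x" unfolding S_def negs_def by auto
        then show ?thesis using True ax by simp
      next
        case False
        then have c: "\<not> card (negs x) \<le> 1" using ax by simp
        have "S = occurrences m lit x - negs x" unfolding S_def negs_def using False by auto
        moreover have "negs x \<subseteq> occurrences m lit x" unfolding negs_def by auto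
        ultimately have "card S = card (occurrences m lit x) - card (negs x)"
          using card_Diff_subset inst_facts(3)[OF inst] finite_subset by metis
        moreover have "card (occurrences m lit x) \<le> 3" using inst_facts(2)[OF inst x1[folded x_def]] .
        ultimately show ?thesis using c by simp
      qed
      have "(j1, q1) = (j2, q2)"
      proof (rule ccontr)
        assume "(j1, q1) \<noteq> (j2, q2)"
        then have "card {(j1, q1), (j2, q2)} = 2" by simp
        moreover have "card {(j1, q1), (j2, q2)} \<le> card S"
          by (rule card_mono[OF finS]) (use in1 in2 in auto)
        ultimately show False using cardS by simp
      qed
      then have "j1 = j2" "q1 = q2" by auto
      then have "fst g1 = fst g2" using c1 c2 by simp
      then show ?thesis using same[OF GI[OF that(1)] GI[OF that(3)]] c1 c2 \<open>j1 = j2\<close> by blast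
    qed
  qed
  have injt: "inj_on tok G"
  proof (rule inj_onI)
    fix g1 g2 assume g: "g1 \<in> G" "g2 \<in> G" "tok g1 = tok g2"
    show "g1 = g2"
    proof (cases "vgame n (A g1) (B g1) (fst g1)")
      case V1: True
      show ?thesis
      proof (cases "vgame n (A g2) (B g2) (fst g2)")
        case V2: True
        have "vi g1 = vi g2" using varf[OF V1] varf[OF V2] g(3) by simp
        then show ?thesis using same[OF GI[OF g(1)] GI[OF g(2)]] varf[OF V1] varf[OF V2] by metis
      next
        case False
        then show ?thesis using VC[OF g(1) V1 g(2) False g(3)] by simp
      qed
    next
      case C1: False
      show ?thesis
      proof (cases "vgame n (A g2) (B g2) (fst g2)")
        case V2: True
        then show ?thesis using VC[OF g(2) V2 g(1) C1 g(3)[symmetric]] by simp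
      next
        case False
        then show ?thesis using CC[OF g(1) C1 g(2) False g(3)] by simp
      qed
    qed
  qed
  define sat where "sat = {j\<in>{1..m}. clause_sat lit a j}"
  have img: "tok ` G \<subseteq> {1..n} <+> sat"
  proof
    fix t assume "t \<in> tok ` G"
    then obtain g where g: "g \<in> G" "t = tok g" by (rule imageE) simp
    show "t \<in> {1..n} <+> sat"
    proof (cases "vgame n (A g) (B g) (fst g)")
      case True
      then show ?thesis using varf[OF True] g by (auto simp: Plus_def)
    next
      case False
      note c = clf[OF g(1) False]
      have x1: "fst (lit (fst (cj g)) (snd (cj g))) \<in> {1..n}" using inst_facts(1)[OF inst] c by blast
      show ?thesis
      proof (cases "a (fst (lit (fst (cj g)) (snd (cj g)))) = snd (lit (fst (cj g)) (snd (cj g)))")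
        case True
        then have "fst (cj g) \<in> sat" using c unfolding sat_def clause_sat_def by auto
        then show ?thesis using c True g by (simp add: Plus_def)
      next
        case False
        then show ?thesis using c x1 g by (simp add: Plus_def)
      qed
    qed
  qed
  have finsat: "finite sat" unfolding sat_def by simp
  have "card G = card (tok ` G)" using card_image[OF injt] by simp
  also have "\<dots> \<le> card ({1..n} <+> sat)" by (rule card_mono) (use finsat img in auto)
  also have "\<dots> = n + card sat" using finsat by (simp add: card_Plus)
  also have "card sat \<le> opt_A m lit"
  proof -
    have "(\<lambda>a. card {j\<in>{1..m}. clause_sat lit a j}) ` UNIV \<subseteq> {0..m}"
    proof
      fix y assume "y \<in> (\<lambda>a. card {j\<in>{1..m}. clause_sat lit a j}) ` UNIV"
      then obtain b where "y = card {j\<in>{1..m}. clause_sat lit b j}" by auto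
      moreover have "card {j\<in>{1..m}. clause_sat lit b j} \<le> card {1..m}" by (rule card_mono) auto
      ultimately show "y \<in> {0..m}" by simp
    qed
    then have "finite ((\<lambda>a. card {j\<in>{1..m}. clause_sat lit a j}) ` UNIV)" by (rule finite_subset) simp
    then show ?thesis unfolding opt_A_def sat_def by (rule Max_ge) simp
  qed
  finally show ?thesis using tv by simp
qed




lemma m_le: assumes inst: "max23sat_instance n m lit occ" shows "m \<le> 3 * n"
proof -
  define S where "S x = {j\<in>{1..m}. \<exists>q\<in>{1,2::nat}. fst (lit j q) = x}" for x
  have "{1..m} \<subseteq> (\<Union>x\<in>{1..n}. S x)"
  proof
    fix j assume j: "j \<in> {1..m}"
    then have "fst (lit j 1) \<in> {1..n}" using inst unfolding max23sat_instance_def by blast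
    then show "j \<in> (\<Union>x\<in>{1..n}. S x)" using j unfolding S_def by blast
  qed
  then have "card {1..m} \<le> card (\<Union>x\<in>{1..n}. S x)"
    by (rule card_mono[rotated]) (auto simp: S_def)
  also have "\<dots> \<le> (\<Sum>x\<in>{1..n}. card (S x))" by (rule card_UN_le) simp
  also have "\<dots> \<le> of_nat (card {1..n}) * 3"
    by (rule sum_bounded_above) (use inst in \<open>auto simp: max23sat_instance_def S_def\<close>)
  finally show ?thesis by simp
qed

lemma rounds_ok: "16 * n \<le> 2 ^ T_rounds n"
  unfolding T_rounds_def
proof (rule LeastI)
  have "16 * n < 2 ^ (16 * n)" by (rule less_exp)
  then show "16 * n \<le> 2 ^ (16 * n)" by simp
qed

lemma card_players:
  assumes "m \<le> 3 * n"
  shows "card (T_players n m) = 2 ^ T_rounds n"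
proof -
  have d: "PVar ` {1..n} \<inter> PT ` {1..n} = {}" "(PVar ` {1..n} \<union> PT ` {1..n}) \<inter> PF ` {1..n} = {}"
    "(PVar ` {1..n} \<union> PT ` {1..n} \<union> PF ` {1..n}) \<inter> PC ` {1..m} = {}"
    "(PVar ` {1..n} \<union> PT ` {1..n} \<union> PF ` {1..n} \<union> PC ` {1..m}) \<inter> PD ` {1..13 * n + T_pad n - m} = {}"
    by auto
  have c: "card (PVar ` {1..n}) = n" "card (PT ` {1..n}) = n" "card (PF ` {1..n}) = n"
    "card (PC ` {1..m}) = m" "card (PD ` {1..13 * n + T_pad n - m}) = 13 * n + T_pad n - m"
    by (simp_all add: card_image inj_on_def)
  have "card (T_players n m) = n + n + n + m + (13 * n + T_pad n - m)"
    unfolding T_players_def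
    by (simp only: card_Un_disjoint[OF _ _ d(4)] card_Un_disjoint[OF _ _ d(3)]
        card_Un_disjoint[OF _ _ d(2)] card_Un_disjoint[OF _ _ d(1)] c finite_Un finite_imageI finite_atLeastAtMost simp_thms)
  also have "\<dots> = 2 ^ T_rounds n"
    using assms rounds_ok[of n] unfolding T_pad_def by simp
  finally show ?thesis .
qed


lemma div16: assumes "t \<in> {1..16}" shows "(16 * c + t - 1) div 16 = (c::nat) \<and> (16 * c + t - 1) mod 16 = t - 1"
proof -
  have e: "16 * c + t - 1 = (t - 1) + 16 * c" using assms by simp
  have "t - 1 < 16" using assms by auto
  then show ?thesis unfolding e by simp
qed

lemma lower:
  assumes inst: "max23sat_instance n m lit occ"
  defines "N \<equiv> T_rounds n"
  shows "\<exists>seat. bij_betw seat {1..2^N} (T_players n m) \<and>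
           opt_A m lit + n \<le> tournament_value (T_rank n m) (T_value n m lit occ) seat N"
proof -
  define rk where "rk = T_rank n m"
  have finA: "finite ((\<lambda>a. card {j\<in>{1..m}. clause_sat lit a j}) ` UNIV)"
  proof (rule finite_subset)
    show "(\<lambda>a. card {j\<in>{1..m}. clause_sat lit a j}) ` UNIV \<subseteq> {0..m}"
    proof
      fix y assume "y \<in> (\<lambda>a. card {j\<in>{1..m}. clause_sat lit a j}) ` UNIV"
      then obtain b where "y = card {j\<in>{1..m}. clause_sat lit b j}" by auto
      moreover have "card {j\<in>{1..m}. clause_sat lit b j} \<le> card {1..m}" by (rule card_mono) auto
      ultimately show "y \<in> {0..m}" by simp
    qed
  qed simp
  have "opt_A m lit \<in> (\<lambda>a. card {j\<in>{1..m}. clause_sat lit a j}) ` UNIV"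
    unfolding opt_A_def by (rule Max_in[OF finA]) simp
  then obtain a where ca: "opt_A m lit = card {j\<in>{1..m}. clause_sat lit a j}" by auto
  define sat where "sat = {j\<in>{1..m}. clause_sat lit a j}"
  define qj where "qj j = (SOME q. q \<in> {1,2::nat} \<and> a (fst (lit j q)) = snd (lit j q))" for j
  define xv where "xv j = fst (lit j (qj j))" for j
  define oj where "oj j = occ j (qj j)" for j
  have satf: "j \<in> {1..m} \<and> qj j \<in> {1,2} \<and> a (xv j) = snd (lit j (qj j)) \<and> xv j \<in> {1..n} \<and> oj j \<in> {1,2,3}
      \<and> (j, qj j) \<in> occurrences m lit (xv j)"
    if "j \<in> sat" for j
  proof -
    have j: "j \<in> {1..m}" and ex: "\<exists>q. q \<in> {1,2::nat} \<and> a (fst (lit j q)) = snd (lit j q)"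
      using that unfolding sat_def clause_sat_def by auto
    have q: "qj j \<in> {1,2::nat} \<and> a (fst (lit j (qj j))) = snd (lit j (qj j))"
      unfolding qj_def by (rule someI_ex[OF ex])
    have x: "xv j \<in> {1..n}" unfolding xv_def using inst_facts(1)[OF inst j] q by blast
    have oc: "(j, qj j) \<in> occurrences m lit (xv j)" unfolding occurrences_def xv_def using j q by auto
    have "bij_betw (\<lambda>(j, q). occ j q) (occurrences m lit (xv j)) {1..card (occurrences m lit (xv j))}"
      using inst x unfolding max23sat_instance_def by blast
    then have "oj j \<in> {1..card (occurrences m lit (xv j))}" using oc unfolding oj_def bij_betw_def by force
    moreover have "card (occurrences m lit (xv j)) \<le> 3" using inst_facts(2)[OF inst x] .
    ultimately have "oj j \<in> {1,2,3}" by auto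
    then show ?thesis using j q x oc unfolding xv_def by simp
  qed
  have lp: "lit_player (lit j (qj j)) = lit_player (xv j, a (xv j))" if "j \<in> sat" for j
  proof -
    have "lit j (qj j) = (xv j, a (xv j))" using satf[OF that] by (simp add: xv_def prod_eq_iff)
    then show ?thesis by simp
  qed
  have uniq: "j = j'" if "j \<in> sat" "j' \<in> sat" "xv j = xv j'" "oj j = oj j'" for j j'
  proof -
    have "bij_betw (\<lambda>(j, q). occ j q) (occurrences m lit (xv j)) {1..card (occurrences m lit (xv j))}"
      using inst satf[OF that(1)] unfolding max23sat_instance_def by blast
    then have "inj_on (\<lambda>(j, q). occ j q) (occurrences m lit (xv j))" by (rule bij_betw_imp_inj_on)
    moreover have "(j, qj j) \<in> occurrences m lit (xv j)" "(j', qj j') \<in> occurrences m lit (xv j)"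
      using satf[OF that(1)] satf[OF that(2)] that(3) by auto
    ultimately have "(j, qj j) = (j', qj j')" using that(4) unfolding oj_def inj_on_def by auto
    then show ?thesis by simp
  qed
  define ot :: "nat \<Rightarrow> nat" where "ot t = (if t = 5 then 3 else t - 1)" for t
  define SP where "SP i t = (if t = 1 then lit_player (i, a i) else if t = 9 then PVar i
     else if t = 10 then lit_player (i, \<not> a i)
     else if t \<in> {2,3,5} \<and> (\<exists>j\<in>sat. xv j = i \<and> oj j = ot t) then PC (SOME j. j\<in>sat \<and> xv j = i \<and> oj j = ot t)
     else PD (7*(i-1)+t-1))" for i t
  define seat0 where "seat0 s = SP ((s-1) div 16 + 1) ((s-1) mod 16 + 1)" for s
  define S0 where "S0 = {s\<in>{1..16*n}. (s-1) mod 16 < 10}"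
  define pos where "pos p = (case p of PVar i \<Rightarrow> 16*(i-1)+9 | PT i \<Rightarrow> 16*(i-1) + (if a i then 1 else 10)
     | PF i \<Rightarrow> 16*(i-1) + (if a i then 10 else 1) | PC j \<Rightarrow> 16*(xv j - 1) + (if oj j = 3 then 5 else oj j + 1)
     | PD d \<Rightarrow> 16*((d-1) div 7) + (d-1) mod 7 + 2)" for p
  have posPD: "pos (PD (7*c + t - 1)) = 16*c + t" if "t \<in> {2..8}" for c t
  proof -
    have e: "7*c + t - 1 - 1 = (t - 2) + 7 * c" using that by auto
    have "t - 2 < 7" using that by auto
    then have d: "(7*c + t - 1 - 1) div 7 = c" "(7*c + t - 1 - 1) mod 7 = t - 2" unfolding e by simp_all
    have "pos (PD (7*c + t - 1)) = 16*((7*c + t - 1 - 1) div 7) + (7*c + t - 1 - 1) mod 7 + 2"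
      unfolding pos_def by (simp only: player.case)
    also have "\<dots> = 16*c + t" unfolding d using that by auto
    finally show ?thesis .
  qed
  have SPcl: "SP i t = PC j \<and> j \<in> sat \<and> xv j = i \<and> oj j = ot t"
    if "t \<in> {2,3,5}" "j \<in> sat" "xv j = i" "oj j = ot t" for i t j
  proof -
    have ex: "\<exists>j\<in>sat. xv j = i \<and> oj j = ot t" using that by blast
    define j0 where "j0 = (SOME j. j\<in>sat \<and> xv j = i \<and> oj j = ot t)"
    have j0: "j0\<in>sat \<and> xv j0 = i \<and> oj j0 = ot t" unfolding j0_def by (rule someI_ex) (use ex in blast)
    then have "j0 = j" using uniq[of j0 j] that by simp
    moreover have "SP i t = PC j0" unfolding SP_def j0_def using that(1) ex by auto
    ultimately show ?thesis using that by simp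
  qed
  have SPnocl: "SP i t = PD (7*(i-1)+t-1)" if "t \<in> {2..8}" "\<not> (t \<in> {2,3,5} \<and> (\<exists>j\<in>sat. xv j = i \<and> oj j = ot t))" for i t
    using that unfolding SP_def by auto
  have posSP: "pos (SP i t) = 16*(i-1)+t" if "i \<ge> 1" "t \<in> {1..10}" for i t
  proof -
    have "t = 1 \<or> t = 9 \<or> t = 10 \<or> t \<in> {2..8}" using that(2) by auto
    moreover have "pos (SP i 1) = 16*(i-1)+1" unfolding SP_def pos_def lit_player_def by simp
    moreover have "pos (SP i 9) = 16*(i-1)+9" unfolding SP_def pos_def by simp
    moreover have "pos (SP i 10) = 16*(i-1)+10" unfolding SP_def pos_def lit_player_def by simp
    moreover have "pos (SP i t) = 16*(i-1)+t" if t: "t \<in> {2..8}"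
    proof (cases "t \<in> {2,3,5} \<and> (\<exists>j\<in>sat. xv j = i \<and> oj j = ot t)")
      case True
      then obtain j where j: "j\<in>sat" "xv j = i" "oj j = ot t" by blast
      have "SP i t = PC j" using SPcl[OF _ j] True by blast
      moreover have h: "(if ot t = 3 then 5 else ot t + 1) = t" using True unfolding ot_def by auto
      ultimately show ?thesis unfolding pos_def using j by (simp only: player.case h)
    next
      case False
      then show ?thesis using SPnocl[OF t False] posPD[OF t, of "i-1"] by simp
    qed
    ultimately show ?thesis by blast
  qed
  have S0dec: "s = 16*((s-1) div 16) + ((s-1) mod 16 + 1) \<and> (s-1) div 16 < n \<and> (s-1) mod 16 + 1 \<in> {1..10}"
    if "s \<in> S0" for s
  proof -
    have s: "1 \<le> s" "s \<le> 16*n" "(s-1) mod 16 < 10" using that unfolding S0_def by auto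
    have "s - 1 = 16*((s-1) div 16) + (s-1) mod 16" by simp
    moreover have "(s-1) div 16 < n" using s(2) s(1) by (simp add: less_mult_imp_div_less) 
    ultimately show ?thesis using s by auto
  qed
  have pos_inv: "pos (seat0 s) = s" if "s \<in> S0" for s
    using posSP[of "(s-1) div 16 + 1" "(s-1) mod 16 + 1"] S0dec[OF that] unfolding seat0_def by simp
  have inj0: "inj_on seat0 S0" using pos_inv by (rule inj_on_inverseI)
  have mle: "m \<le> 3 * n" by (rule m_le[OF inst])
  have SPin: "SP i t \<in> T_players n m" if "i \<in> {1..n}" "t \<in> {1..10}" for i t
  proof -
    have "t = 1 \<or> t = 9 \<or> t = 10 \<or> t \<in> {2..8}" using that(2) by auto
    moreover have "SP i t \<in> T_players n m" if t: "t \<in> {2..8}"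
    proof (cases "t \<in> {2,3,5} \<and> (\<exists>j\<in>sat. xv j = i \<and> oj j = ot t)")
      case True
      then obtain j where j: "j\<in>sat" "xv j = i" "oj j = ot t" by blast
      have "SP i t = PC j" using SPcl[OF _ j] True by blast
      moreover have "j \<in> {1..m}" using satf[OF j(1)] by simp
      ultimately show ?thesis unfolding T_players_def by simp
    next
      case False
      have "7*(i-1)+t-1 \<in> {1..13 * n + T_pad n - m}" using t \<open>i \<in> {1..n}\<close> mle by auto
      then show ?thesis using SPnocl[OF t False] unfolding T_players_def by simp
    qed
    moreover have "SP i 1 \<in> T_players n m" using that(1) unfolding SP_def T_players_def lit_player_def by simp
    moreover have "SP i 9 \<in> T_players n m" using that(1) unfolding SP_def T_players_def by simp
    moreover have "SP i 10 \<in> T_players n m" using that(1) unfolding SP_def T_players_def lit_player_def by simp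
    ultimately show ?thesis by blast
  qed
  have img0: "seat0 ` S0 \<subseteq> T_players n m"
  proof
    fix p assume "p \<in> seat0 ` S0"
    then obtain s where s: "s \<in> S0" "p = seat0 s" by (rule imageE) simp
    show "p \<in> T_players n m" unfolding s(2) seat0_def using SPin S0dec[OF s(1)] by simp
  qed
  have N16: "16 * n \<le> 2^N" unfolding N_def by (rule rounds_ok)
  have S0sub: "S0 \<subseteq> {1..2^N}" using N16 unfolding S0_def by auto
  have finP: "finite (T_players n m)" unfolding T_players_def by simp
  have cardP: "card (T_players n m) = 2^N" unfolding N_def by (rule card_players[OF mle])
  have "card ({1..2^N} - S0) = card (T_players n m - seat0 ` S0)"
    using card_Diff_subset[OF finite_subset[OF S0sub] S0sub] card_Diff_subset[OF finite_subset[OF img0 finP] img0]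
      card_image[OF inj0] cardP by simp
  then obtain h where h: "bij_betw h ({1..2^N} - S0) (T_players n m - seat0 ` S0)"
    using finite_same_card_bij[of "{1..2^N} - S0" "T_players n m - seat0 ` S0"] finP by auto
  define seat where "seat s = (if s \<in> S0 then seat0 s else h s)" for s
  have "bij_betw seat (S0 \<union> ({1..2^N} - S0)) (seat0 ` S0 \<union> (T_players n m - seat0 ` S0))"
    unfolding seat_def by (rule bij_betw_disjoint_Un) (use inj0 h in \<open>auto simp: bij_betw_def\<close>)
  moreover have "S0 \<union> ({1..2^N} - S0) = {1..2^N}" using S0sub by auto
  moreover have "seat0 ` S0 \<union> (T_players n m - seat0 ` S0) = T_players n m" using img0 by auto
  ultimately have bij: "bij_betw seat {1..2^N} (T_players n m)" by simp
  have seatS0: "seat (16*(i-1) + t) = SP i t" if "i \<in> {1..n}" "t \<in> {1..10}" for i t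
  proof -
    have d: "(16*(i-1) + t - 1) div 16 = i - 1" "(16*(i-1) + t - 1) mod 16 = t - 1" using div16[of t "i-1"] that by auto
    have "16*(i-1) + t \<le> 16 * n" using that by auto
    moreover have "(16*(i-1) + t - 1) mod 16 < 10" unfolding d using that by auto
    ultimately have in0: "16*(i-1) + t \<in> S0" using that unfolding S0_def by auto
    have "seat (16*(i-1) + t) = SP ((16*(i-1) + t - 1) div 16 + 1) ((16*(i-1) + t - 1) mod 16 + 1)"
      using in0 unfolding seat_def seat0_def by simp
    also have "\<dots> = SP i t" unfolding d using that by simp
    finally show ?thesis .
  qed
  have rkF: "rk (SP i 1) < 3*n" if "i \<in> {1..n}" for i
    using that unfolding SP_def rk_def lit_player_def by auto
  have rkge: "3*n \<le> rk (SP i t)" if "t \<in> {2..8}" for i t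
  proof (cases "t \<in> {2,3,5} \<and> (\<exists>j\<in>sat. xv j = i \<and> oj j = ot t)")
    case True
    then obtain j where j: "j\<in>sat" "xv j = i" "oj j = ot t" by blast
    have "SP i t = PC j" using SPcl[OF _ j] True by blast
    then show ?thesis unfolding rk_def by simp
  next
    case False
    then show ?thesis using SPnocl[OF that False] unfolding rk_def by simp
  qed
  have rkPD: "3*n + m \<le> rk (SP i t)" if "t \<in> {4,6,7,8}" for i t
  proof -
    have "t \<in> {2..8}" "\<not> (t \<in> {2,3,5} \<and> (\<exists>j\<in>sat. xv j = i \<and> oj j = ot t))" using that by auto
    then have "SP i t = PD (7*(i-1)+t-1)" using SPnocl by blast
    moreover have "t \<ge> 2" using that by auto
    ultimately show ?thesis unfolding rk_def by simp
  qed
  have rkPC: "rk (PC j) < 3*n + m" if "j \<in> sat" for j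
    using satf[OF that] unfolding rk_def by auto
  define I where "I = Sigma {1..N} (\<lambda>r. {1..(2::nat)^(N-r)})"
  define A where "A g = block_winner rk seat (fst g - 1) (2 * snd g - 1)" for g
  define B where "B g = block_winner rk seat (fst g - 1) (2 * snd g)" for g
  define G where "G = {g\<in>I. vgame n (A g) (B g) (fst g) \<or> (\<exists>j q. cgame m lit occ (A g) (B g) (fst g) j q)}"
  have tv: "tournament_value (T_rank n m) (T_value n m lit occ) seat N = card G"
    unfolding G_def A_def B_def I_def rk_def
    by (rule tv_as_card) (rule T_value_eq)
  define f where "f = case_sum (\<lambda>i. (1::nat, 8*(i-1)+5)) (\<lambda>j. (oj j, 2^(4 - oj j) * (xv j - 1) + 1))"
  define D where "D = {1..n} <+> sat"
  have N4: "4 \<le> N" if "n \<ge> 1"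
  proof (rule ccontr)
    assume "\<not> 4 \<le> N"
    then have "(2::nat)^N \<le> 2^3" by (intro power_increasing) auto
    then show False using N16 that by simp
  qed
  have injf: "inj_on f D"
  proof (rule inj_onI)
    fix u w assume u: "u \<in> D" "w \<in> D" "f u = f w"
    show "u = w"
    proof (cases u)
      case (Inl i)
      show ?thesis
      proof (cases w)
        case (Inl i')
        then show ?thesis using u \<open>u = Inl i\<close> unfolding f_def D_def by auto
      next
        case (Inr j)
        have h: "1 = oj j" "8*(i-1)+5 = 2^(4 - oj j)*(xv j - 1)+1"
          using u \<open>u = Inl i\<close> Inr unfolding f_def by auto
        have "8*(i-1)+5 = 8*(xv j - 1)+1" using h(2) unfolding h(1)[symmetric] by simp
        then have "False" by presburger
        then show ?thesis ..
      qed
    next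
      case (Inr j)
      show ?thesis
      proof (cases w)
        case (Inl i)
        have h: "1 = oj j" "8*(i-1)+5 = 2^(4 - oj j)*(xv j - 1)+1"
          using u \<open>u = Inr j\<close> Inl unfolding f_def by auto
        have "8*(i-1)+5 = 8*(xv j - 1)+1" using h(2) unfolding h(1)[symmetric] by simp
        then have "False" by presburger
        then show ?thesis ..
      next
        case (Inr j')
        have jj: "j \<in> sat" "j' \<in> sat" using u \<open>u = Inr j\<close> Inr unfolding D_def by auto
        have o: "oj j = oj j'" and e: "2^(4 - oj j) * (xv j - 1) = 2^(4 - oj j') * (xv j' - 1)"
          using u \<open>u = Inr j\<close> Inr unfolding f_def by auto
        have "xv j - 1 = xv j' - 1" using e o by simp
        then have "xv j = xv j'" using satf[OF jj(1)] satf[OF jj(2)] by auto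
        then show ?thesis using uniq[OF jj _ o] \<open>u = Inr j\<close> Inr by simp
      qed
    qed
  qed
  have WA: "block_winner rk seat r kk = SP i 1"
    if "i \<in> {1..n}" "r \<le> 2" "kk \<ge> 1" "blk r kk = {16*(i-1)+1 .. 16*(i-1)+2^r}" for i r kk
  proof -
    have s1: "seat (16*(i-1)+1) = SP i 1" using seatS0[OF that(1), of 1] by simp
    have "block_winner rk seat r kk = seat (16*(i-1)+1)"
    proof (rule winner_unique[OF that(3)])
      show "16*(i-1)+1 \<in> blk r kk" using that(4) by simp
      fix s assume s: "s \<in> blk r kk" "s \<noteq> 16*(i-1)+1"
      define t where "t = s - 16*(i-1)"
      have "(2::nat)^r \<le> 2^2" using that(2) by (intro power_increasing) auto
      then have t: "t \<in> {2..4}" "s = 16*(i-1)+t" using s that(4) unfolding t_def by auto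
      have "seat s = SP i t" using seatS0[OF that(1), of t] t by simp
      moreover have "3*n \<le> rk (SP i t)" using rkge[of t i] t by simp
      ultimately show "rk (seat (16*(i-1)+1)) < rk (seat s)" using rkF[OF that(1)] s1 by simp
    qed
    then show ?thesis using s1 by simp
  qed
  have WB: "block_winner rk seat r kk = PC j"
    if "j \<in> sat" "xv j = i" "oj j = r+1" "r \<le> 2" "kk \<ge> 1" "blk r kk = {16*(i-1)+2^r+1 .. 16*(i-1)+2^(r+1)}" for i r kk j
  proof -
    have i: "i \<in> {1..n}" using satf[OF that(1)] that(2) by simp
    have rr: "r = 0 \<or> r = 1 \<or> r = 2" using that(4) by auto
    define tt where "tt = 2^r + (1::nat)"
    have tt: "tt \<in> {2,3,5}" "ot tt = r + 1" using rr unfolding tt_def ot_def by auto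
    have s1: "seat (16*(i-1)+tt) = PC j"
      using seatS0[OF i, of tt] SPcl[OF tt(1) that(1) that(2)] tt that(3) by auto
    have "block_winner rk seat r kk = seat (16*(i-1)+tt)"
    proof (rule winner_unique[OF that(5)])
      show "16*(i-1)+tt \<in> blk r kk" using that(6) unfolding tt_def by simp
      fix s assume s: "s \<in> blk r kk" "s \<noteq> 16*(i-1)+tt"
      define t where "t = s - 16*(i-1)"
      have t0: "t \<in> {tt+1..2^(r+1)}" "s = 16*(i-1)+t" using s that(6) unfolding t_def tt_def by auto
      have t: "t \<in> {4,6,7,8}" using rr t0(1) unfolding tt_def by auto
      have "seat s = SP i t" using seatS0[OF i, of t] t t0 by auto
      moreover have "3*n + m \<le> rk (SP i t)" using rkPD[of t i] t by simp
      ultimately show "rk (seat (16*(i-1)+tt)) < rk (seat s)" using rkPC[OF that(1)] s1 by simp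
    qed
    then show ?thesis using s1 by simp
  qed
  have blkAB: "blk (r-1) (2*(2^(4-r)*c+1)-1) = {16*c+1 .. 16*c+2^(r-1)} \<and>
               blk (r-1) (2*(2^(4-r)*c+1)) = {16*c+2^(r-1)+1 .. 16*c+2^r}" if "r \<in> {1,2,3::nat}" for r c
    using that unfolding blk_def by (auto simp: algebra_simps)
  have imgf: "f ` D \<subseteq> G"
  proof
    fix g assume "g \<in> f ` D"
    then obtain u where u: "u \<in> D" "g = f u" by (rule imageE) simp
    show "g \<in> G"
    proof (cases u)
      case (Inl i)
      have i: "i \<in> {1..n}" using u Inl unfolding D_def by auto
      have N4': "4 \<le> N" using N4 i by simp
      have "2^N = 2 * (2::nat)^(N-1)" using N4' by (metis Suc_diff_1 less_le_trans numeral_less_iff power_Suc semiring_norm(76) zero_less_numeral)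
      then have k: "8*(i-1)+5 \<le> (2::nat)^(N-1)" using N16 i by auto
      have g: "g = (1, 8*(i-1)+5)" using u Inl unfolding f_def by simp
      have gI: "g \<in> I" unfolding g I_def using N4' k by auto
      have e9: "2*(8*(i-1)+5)-1 = 16*(i-1)+9" by simp
      have e10: "2*(8*(i-1)+5) = 16*(i-1)+10" by simp
      have "A g = seat (16*(i-1)+9)" unfolding A_def g by (simp only: fst_conv snd_conv diff_self_eq_0 block_winner.simps e9)
      then have a9: "A g = PVar i" using seatS0[OF i, of 9] unfolding SP_def by simp
      have "B g = seat (16*(i-1)+10)" unfolding B_def g by (simp only: fst_conv snd_conv diff_self_eq_0 block_winner.simps e10)
      then have b10: "B g = lit_player (i, \<not> a i)" using seatS0[OF i, of 10] unfolding SP_def by simp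
      have fg: "fst g = 1" unfolding g by simp
      have "vgame n (PVar i) (lit_player (i, \<not> a i)) 1" unfolding vgame_def using i by (auto simp: lit_player_def)
      then have "vgame n (A g) (B g) (fst g)" unfolding a9 b10 fg .
      then show ?thesis using gI unfolding G_def by blast
    next
      case (Inr j)
      have j: "j \<in> sat" using u Inr unfolding D_def by auto
      note sj = satf[OF j]
      define i where "i = xv j"
      define r where "r = oj j"
      have i: "i \<in> {1..n}" and r: "r \<in> {1,2,3}" using sj unfolding i_def r_def by auto
      have N4': "4 \<le> N" using N4 i by simp
      define k where "k = 2^(4-r)*(i-1)+1"
      have g: "g = (r, k)" using u Inr unfolding f_def k_def r_def i_def by simp
      have p1: "(2::nat)^(4-r) * 2^r = 16" using r by auto
      have rN: "N - r + r = N" using r N4' by auto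
      have p2: "(2::nat)^(N-r) * 2^r = 2^N" unfolding power_add[symmetric] rN ..
      have "2^(4-r) * n * 2^r \<le> (2::nat)^(N-r) * 2^r" using p1 p2 N16 by (simp add: mult.commute mult.left_commute)
      then have "2^(4-r) * n \<le> (2::nat)^(N-r)" by simp
      moreover have "k \<le> 2^(4-r) * n"
      proof -
        have a1: "1 \<le> (2::nat)^(4-r)" by simp
        obtain i0 where i0: "i = Suc i0" using i by (cases i) auto
        have "k \<le> 2^(4-r)*i0 + 2^(4-r)" unfolding k_def i0 using a1 by simp
        also have "\<dots> = 2^(4-r) * i" unfolding i0 by simp
        also have "\<dots> \<le> 2^(4-r) * n" using i by simp
        finally show ?thesis .
      qed
      ultimately have kk: "k \<le> 2^(N-r)" by simp
      have gI: "g \<in> I" unfolding g I_def using N4' kk r unfolding k_def by auto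
      have k1: "k \<ge> 1" unfolding k_def by simp
      have bAB: "blk (r-1) (2*k-1) = {16*(i-1)+1 .. 16*(i-1)+2^(r-1)}"
                "blk (r-1) (2*k) = {16*(i-1)+2^(r-1)+1 .. 16*(i-1)+2^r}"
        using blkAB[OF r, of "i-1"] unfolding k_def by auto
      have "A g = SP i 1" unfolding A_def g fst_conv snd_conv
        by (rule WA[OF i]) (use r bAB k1 in auto)
      then have ag: "A g = lit_player (lit j (qj j))" unfolding SP_def lp[OF j] i_def by simp
      have r1: "r = (r-1)+1" "2^(r-1+1) = (2::nat)^r" using r by auto
      have "B g = PC j" unfolding B_def g fst_conv snd_conv
        by (rule WB[OF j i_def[symmetric]]) (use r bAB r1 k1 in \<open>auto simp: r_def\<close>)
      then have "cgame m lit occ (A g) (B g) (fst g) j (qj j)"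
        unfolding cgame_def using ag sj g unfolding r_def oj_def by auto
      then show ?thesis using gI unfolding G_def by blast
    qed
  qed
  have finG: "finite G" unfolding G_def I_def by (rule finite_subset[of _ "Sigma {1..N} (\<lambda>r. {1..(2::nat)^(N-r)})"]) auto
  have finsat: "finite sat" unfolding sat_def by simp
  have "opt_A m lit + n = card D" unfolding D_def ca sat_def[symmetric] using finsat by (simp add: card_Plus)
  also have "\<dots> = card (f ` D)" using card_image[OF injf] by simp
  also have "\<dots> \<le> card G" by (rule card_mono[OF finG imgf])
  finally show ?thesis using tv bij by auto
qed




theorem corollary1:
  assumes "max23sat_instance n m lit occ"
  shows "opt_B (T_players n m) (T_rank n m) (T_value n m lit occ) (T_rounds n)
           = opt_A m lit + n"
proof -
  define P where "P = T_players n m"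
  define N where "N = T_rounds n"
  define S where "S = seeding_value P (T_rank n m) (T_value n m lit occ) N ` {\<sigma>. bij_betw \<sigma> P {1..2^N}}"
  have up: "y \<le> opt_A m lit + n" if yS: "y \<in> S" for y
  proof -
    obtain \<sigma> where s: "bij_betw \<sigma> P {1..2^N}" "y = seeding_value P (T_rank n m) (T_value n m lit occ) N \<sigma>"
      using yS unfolding S_def by blast
    have "bij_betw (the_inv_into P \<sigma>) {1..2^N} P" by (rule bij_betw_the_inv_into[OF s(1)])
    then have "inj_on (the_inv_into P \<sigma>) {1..2^N}" by (rule bij_betw_imp_inj_on)
    then show ?thesis unfolding s(2) seeding_value_def by (rule upper[OF assms])
  qed
  obtain seat where seat: "bij_betw seat {1..2^N} P"
    "opt_A m lit + n \<le> tournament_value (T_rank n m) (T_value n m lit occ) seat N"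
    using lower[OF assms] unfolding P_def N_def by blast
  define \<sigma> where "\<sigma> = the_inv_into {1..2^N} seat"
  have bs: "bij_betw \<sigma> P {1..2^N}" unfolding \<sigma>_def by (rule bij_betw_the_inv_into[OF seat(1)])
  have eq: "the_inv_into P \<sigma> s = seat s" if "s \<in> {1..2^N}" for s
  proof -
    have "\<sigma> (seat s) = s" unfolding \<sigma>_def by (rule the_inv_into_f_f[OF bij_betw_imp_inj_on[OF seat(1)] that])
    moreover have "seat s \<in> P" using seat(1) that unfolding bij_betw_def by blast
    ultimately show ?thesis using the_inv_into_f_f[OF bij_betw_imp_inj_on[OF bs], of "seat s"] by simp
  qed
  have "seeding_value P (T_rank n m) (T_value n m lit occ) N \<sigma> = tournament_value (T_rank n m) (T_value n m lit occ) seat N"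
    unfolding seeding_value_def by (rule tv_cong) (rule eq)
  then have ge: "opt_A m lit + n \<le> seeding_value P (T_rank n m) (T_value n m lit occ) N \<sigma>"
    using seat(2) by simp
  have mem: "seeding_value P (T_rank n m) (T_value n m lit occ) N \<sigma> \<in> S"
    unfolding S_def using bs by (intro imageI) simp
  have val: "seeding_value P (T_rank n m) (T_value n m lit occ) N \<sigma> = opt_A m lit + n"
    using up[OF mem] ge by simp
  have finS: "finite S" by (rule finite_subset[of _ "{0..opt_A m lit + n}"]) (use up in auto)
  have mem2: "opt_A m lit + n \<in> S" using mem unfolding val .
  have "Max S = opt_A m lit + n" by (rule Max_eqI[OF finS up mem2])
  then show ?thesis unfolding opt_B_def S_def P_def N_def .
qed

end
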